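(* Let $n\ge 3$, $0<\ell\le m$, and let $J$ be a real symmetric diagonally balanced $n\times n$ matrix with $\ell\le J_{ij}\le m$ for all $i\ne j$. Let $S=(n-2)I_n+\mathbf{1}_n\mathbf{1}_n^\top$. Then $\ell S\preceq J\preceq mS$, and the eigenvalues $\lambda_1\le\dots\le\lambda_n$ of $J$ satisfy $$(n-2)\ell\le\lambda_i\le(n-2)m\ \ (1\le i\le n-1),\qquad 2(n-1)\ell\le\lambda_n\le 2(n-1)m.$$ If instead $J$ is only assumed diagonally dominant (with $\ell\le J_{ij}\le m$ for $i\neq j$), then $\ell S\preceq J$ and the lower bounds on the eigenvalues still hold.
   Context: For a real $n\times n$ matrix $J$, $\Delta_i(J)=|J_{ii}|-\sum_{j\ne i}|J_{ij}|$; $J$ is diagonally dominant if $\Delta_i(J)\ge0$ for all $i$ and diagonally balanced if $\Delta_i(J)=0$ for all $i$. $A\preceq B$ (Loewner order) means $B-A$ is positive semidefinite. $\mathbf{1}_n$ is the all-ones vector.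
   Formalization: The diagonal entries $J_{ii}$ are also assumed nonnegative, for both the diagonally balanced and the diagonally dominant case, so $|J_{ii}|$ in Delta_i equals $J_{ii}$. The statement above fails without it. *)

theory Defs
  imports "Jordan_Normal_Form.Matrix" "Jordan_Normal_Form.Char_Poly"
begin

definition row_excess :: "real mat \<Rightarrow> nat \<Rightarrow> real" where
  "row_excess J i = \<bar>J $$ (i, i)\<bar> - (\<Sum>j \<in> {0..<dim_col J} - {i}. \<bar>J $$ (i, j)\<bar>)"

definition diag_dominant :: "real mat \<Rightarrow> bool" where
  "diag_dominant J \<longleftrightarrow> (\<forall>i < dim_row J. row_excess J i \<ge> 0)"

definition diag_balanced :: "real mat \<Rightarrow> bool" where
  "diag_balanced J \<longleftrightarrow> (\<forall>i < dim_row J. row_excess J i = 0)"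

definition psd :: "real mat \<Rightarrow> bool" where
  "psd A \<longleftrightarrow> (\<forall>x \<in> carrier_vec (dim_row A). x \<bullet> (A *\<^sub>v x) \<ge> 0)"

definition loewner_le :: "real mat \<Rightarrow> real mat \<Rightarrow> bool" where
  "loewner_le A B \<longleftrightarrow> psd (B - A)"

definition S_mat :: "nat \<Rightarrow> real mat" where
  "S_mat n = real (n - 2) \<cdot>\<^sub>m 1\<^sub>m n + mat n n (\<lambda>_. 1)"

definition sorted_eigenvalues :: "real mat \<Rightarrow> real list \<Rightarrow> bool" where
  "sorted_eigenvalues J lams \<longleftrightarrow> sorted lams \<and> length lams = dim_row J \<and>
     char_poly J = (\<Prod>a \<leftarrow> lams. [:- a, 1:])"

end

theory Submission imports Defs "Jordan_Normal_Form.Schur_Decomposition" begin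


lemma conj_real_vec[simp]: "conjugate (v :: real vec) = v"
  by (intro eq_vecI, auto)

definition diag_list :: "nat \<Rightarrow> real list \<Rightarrow> real mat" where
  "diag_list n es = mat n n (\<lambda>(i,j). if i = j then es ! i else 0)"

lemma spectral:
  fixes A :: "real mat"
  assumes "A \<in> carrier_mat n n" "transpose_mat A = A" "char_poly A = (\<Prod>e \<leftarrow> es. [:- e, 1:])"
  shows "\<exists>U. U \<in> carrier_mat n n \<and> transpose_mat U * U = 1\<^sub>m n \<and> A = U * diag_list n es * transpose_mat U"
  using assms
proof (induct es arbitrary: n A)
  case Nil
  with degree_monic_char_poly[of A n] have n0: "n = 0" by auto
  show ?case
    by (rule exI[of _ "1\<^sub>m n"], insert Nil n0, auto intro!: eq_matI)
next
  case (Cons e es n A)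
  from Cons have A: "A \<in> carrier_mat n n" and symA: "transpose_mat A = A" by auto
  have cp: "char_poly A = [: -e, 1 :] * (\<Prod>e \<leftarrow> es. [:- e, 1:])" using Cons(4) by auto
  have mon: "monic (\<Prod>e\<leftarrow> es. [:- e, 1:])" by (rule monic_prod_list, auto)
  have deg: "degree (char_poly A) = Suc (degree (\<Prod>e\<leftarrow> es. [:- e, 1:]))" unfolding cp
    by (subst degree_mult_eq, insert mon, auto)
  with degree_monic_char_poly[OF A] have n: "n \<noteq> 0" by auto
  define v where "v = find_eigenvector A e"
  define b where "b = basis_completion v"
  define ws where "ws = gram_schmidt n b"
  have e: "eigenvalue A e" 
    unfolding eigenvalue_root_char_poly[OF A] cp by simp
  from find_eigenvector[OF A e] have ev: "eigenvector A v e" unfolding v_def .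
  from this[unfolded eigenvector_def]
  have v[simp]: "v \<in> carrier_vec n" and v0: "v \<noteq> 0\<^sub>v n" and Av: "A *\<^sub>v v = e \<cdot>\<^sub>v v" using A by auto
  interpret cof_vec_space n "TYPE(real)" .
  from basis_completion[OF v v0, folded b_def]
  have dist_b: "distinct b" 
    and indep: "\<not> lin_dep (set b)" and b: "set b \<subseteq> carrier_vec n" and hdb: "hd b = v" 
    and len_b: "length b = n" by auto
  from hdb len_b n obtain vs where bv: "b = v # vs" by (cases b, auto)
  from gram_schmidt_result[OF b dist_b indep refl, folded ws_def]
  have ws: "set ws \<subseteq> carrier_vec n" "corthogonal ws" "length ws = n" 
    by (auto simp: len_b)
  from gram_schmidt_hd[OF v, of vs, folded bv] have hdws: "hd ws = v" unfolding ws_def .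
  define ns where "ns = map (\<lambda>w. (1 / sqrt (w \<bullet> w)) \<cdot>\<^sub>v w) ws"
  have lns: "length ns = n" unfolding ns_def using ws by auto
  have nsc: "\<And>i. i < n \<Longrightarrow> ns ! i \<in> carrier_vec n" unfolding ns_def using ws by auto
  have wsc: "\<And>i. i < n \<Longrightarrow> ws ! i \<in> carrier_vec n" using ws by auto
  have wpos: "\<And>i. i < n \<Longrightarrow> ws ! i \<bullet> ws ! i > 0"
  proof -
    fix i assume i: "i < n"
    have "ws ! i \<bullet>c ws ! i \<noteq> 0" using corthogonalD[OF ws(2), of i i] i ws by auto
    moreover have "ws ! i \<bullet>c ws ! i \<ge> 0" by (rule conjugate_square_ge_0_vec)
    ultimately show "ws ! i \<bullet> ws ! i > 0" by auto
  qed
  have worth: "\<And>i j. i < n \<Longrightarrow> j < n \<Longrightarrow> i \<noteq> j \<Longrightarrow> ws ! i \<bullet> ws ! j = 0"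
    using corthogonalD[OF ws(2)] ws by auto
  have northo: "\<And>i j. i < n \<Longrightarrow> j < n \<Longrightarrow> ns ! i \<bullet> ns ! j = (if i = j then 1 else 0)"
  proof -
    fix i j assume i: "i < n" and j: "j < n"
    have "ns ! i \<bullet> ns ! j = (1 / sqrt (ws!i \<bullet> ws!i)) * (1 / sqrt (ws!j \<bullet> ws!j)) * (ws ! i \<bullet> ws ! j)"
      unfolding ns_def using i j ws wsc[OF i] wsc[OF j] by auto
    then show "ns ! i \<bullet> ns ! j = (if i = j then 1 else 0)"
      using worth[OF i j] wpos[OF i] by (auto simp: field_simps)
  qed
  define W where "W = mat_of_cols n ns"
  have W: "W \<in> carrier_mat n n" unfolding W_def using lns by auto
  have colW: "\<And>i. i < n \<Longrightarrow> col W i = ns ! i" unfolding W_def using lns nsc by auto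
  have WtW: "transpose_mat W * W = 1\<^sub>m n"
    by (rule eq_matI, insert W colW northo, auto)
  have WWt: "W * transpose_mat W = 1\<^sub>m n"
    by (rule mat_mult_left_right_inverse[OF _ W WtW], insert W, auto)
  define A' where "A' = transpose_mat W * A * W"
  have A': "A' \<in> carrier_mat n n" unfolding A'_def using W A by auto
  have symA': "transpose_mat A' = A'"
    unfolding A'_def using W A symA
    by (simp add: transpose_mult[of _ n n _ n] assoc_mult_mat[of _ n n _ n _ n])
  have ns0: "ns ! 0 = (1 / sqrt (v \<bullet> v)) \<cdot>\<^sub>v v"
    unfolding ns_def using hdws ws n by (cases ws, auto)
  have Ans0: "A *\<^sub>v ns ! 0 = e \<cdot>\<^sub>v ns ! 0"
    unfolding ns0 using mult_mat_vec[OF A v] Av by (auto simp: smult_smult_assoc mult.commute)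
  have col0: "\<And>i. i < n \<Longrightarrow> A' $$ (i, 0) = (if i = 0 then e else 0)"
  proof -
    fix i assume i: "i < n"
    have "A' = transpose_mat W * (A * W)" unfolding A'_def using W A by auto
    moreover have "(transpose_mat W * (A * W)) $$ (i, 0) = row (transpose_mat W) i \<bullet> col (A * W) 0"
      using i n W A by (intro index_mult_mat(1), auto)
    moreover have "row (transpose_mat W) i = col W i" using i W by auto
    moreover have "col (A * W) 0 = A *\<^sub>v col W 0" using n W A by (intro col_mult2, auto)
    ultimately have "A' $$ (i, 0) = col W i \<bullet> (A *\<^sub>v col W 0)" by simp
    also have "\<dots> = e * (ns ! i \<bullet> ns ! 0)" using colW[OF i] colW[of 0] n Ans0 nsc[OF i] nsc[of 0]
      by auto
    finally show "A' $$ (i, 0) = (if i = 0 then e else 0)" using northo[OF i, of 0] n by auto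
  qed
  have row0: "\<And>j. j < n \<Longrightarrow> A' $$ (0, j) = (if j = 0 then e else 0)"
  proof -
    fix j assume j: "j < n"
    have "A' $$ (0, j) = transpose_mat A' $$ (0, j)" using symA' by simp
    also have "\<dots> = A' $$ (j, 0)" using j n A' by auto
    finally show "A' $$ (0, j) = (if j = 0 then e else 0)" using col0[OF j] by auto
  qed
  define A3 where "A3 = mat (n-1) (n-1) (\<lambda>(i,j). A' $$ (Suc i, Suc j))"
  define E where "E = mat 1 1 (\<lambda>_. e)"
  have A3: "A3 \<in> carrier_mat (n-1) (n-1)" unfolding A3_def by auto
  have E: "E \<in> carrier_mat 1 1" unfolding E_def by auto
  have A'block: "A' = four_block_mat E (0\<^sub>m 1 (n-1)) (0\<^sub>m (n-1) 1) A3"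
    by (rule eq_matI, insert A' n row0 col0, auto simp: E_def A3_def)
  have simAA': "similar_mat_wit A A' W (transpose_mat W)"
  proof (rule similar_mat_witI[OF WWt WtW _ A A' W])
    have "W * A' * transpose_mat W = (W * transpose_mat W) * A * (W * transpose_mat W)"
      unfolding A'_def using W A by (simp add: assoc_mult_mat[of _ n n _ n _ n])
    then show "A = W * A' * transpose_mat W" unfolding WWt using A by simp
  qed (insert W, auto)
  hence "similar_mat A A'" unfolding similar_mat_def by blast
  from char_poly_similar[OF this] cp
  have cp': "char_poly A' = [: -e,1 :] * (\<Prod> e \<leftarrow> es. [:- e, 1:])" by simp
  also have "char_poly A' = char_poly E * char_poly A3" 
    unfolding A'block
    by (rule char_poly_four_block_zeros_col[OF E _ A3], auto)
  also have "char_poly E = [: -e,1 :]"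
    by (simp add: E_def char_poly_defs det_def sign_def)
  finally have cp3: "char_poly A3 = (\<Prod> e \<leftarrow> es. [:- e, 1:])"
    by (metis mult_cancel_left pCons_eq_0_iff zero_neq_one)
  have symA3: "transpose_mat A3 = A3"
  proof (rule eq_matI)
    fix i j assume "i < dim_row A3" "j < dim_col A3"
    then have ij: "Suc i < n" "Suc j < n" using A3 by auto
    have "A' $$ (Suc j, Suc i) = transpose_mat A' $$ (Suc i, Suc j)" using ij A' by auto
    then show "transpose_mat A3 $$ (i, j) = A3 $$ (i, j)" using ij symA' unfolding A3_def by auto
  qed (insert A3, auto)
  from Cons(1)[OF A3 symA3 cp3] obtain U3 where U3: "U3 \<in> carrier_mat (n-1) (n-1)"
    and U3U3: "transpose_mat U3 * U3 = 1\<^sub>m (n-1)" and A3U: "A3 = U3 * diag_list (n-1) es * transpose_mat U3"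
    by auto
  define D3 where "D3 = diag_list (n-1) es"
  have D3: "D3 \<in> carrier_mat (n-1) (n-1)" unfolding D3_def diag_list_def by auto
  define B where "B = four_block_mat (1\<^sub>m 1) (0\<^sub>m 1 (n-1)) (0\<^sub>m (n-1) 1) U3"
  have n1: "1 + (n - 1) = n" using n by auto
  have B: "B \<in> carrier_mat n n" unfolding B_def using U3 n1 
    by (metis four_block_carrier_mat one_carrier_mat)
  have Bt: "transpose_mat B = four_block_mat (1\<^sub>m 1) (0\<^sub>m 1 (n-1)) (0\<^sub>m (n-1) 1) (transpose_mat U3)"
    unfolding B_def by (subst transpose_four_block_mat[OF _ _ _ U3], auto)
  have BtB: "transpose_mat B * B = 1\<^sub>m n" unfolding Bt unfolding B_def
    by (subst mult_four_block_mat[of _ 1 1 _ "n-1" _ "n-1" _ _ 1 _ "n-1"], insert U3 U3U3 n1, auto simp: four_block_one_mat)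
  define Dn where "Dn = four_block_mat E (0\<^sub>m 1 (n-1)) (0\<^sub>m (n-1) 1) D3"
  have Dn: "Dn = diag_list n (e # es)"
    by (rule eq_matI, insert n, auto simp: Dn_def E_def D3_def diag_list_def)
  have Dnc: "Dn \<in> carrier_mat n n" unfolding Dn diag_list_def by auto
  have BD: "B * Dn = four_block_mat E (0\<^sub>m 1 (n-1)) (0\<^sub>m (n-1) 1) (U3 * D3)"
    unfolding B_def Dn_def
    by (subst mult_four_block_mat[of _ 1 1 _ "n-1" _ "n-1" _ _ 1 _ "n-1"], insert U3 D3 E, auto)
  have BDB: "four_block_mat E (0\<^sub>m 1 (n-1)) (0\<^sub>m (n-1) 1) (U3 * D3) * transpose_mat B
     = four_block_mat E (0\<^sub>m 1 (n-1)) (0\<^sub>m (n-1) 1) (U3 * D3 * transpose_mat U3)"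
    unfolding Bt
    by (subst mult_four_block_mat[of _ 1 1 _ "n-1" _ "n-1" _ _ 1 _ "n-1"], insert U3 D3 E, auto)
  have A'BD: "A' = B * Dn * transpose_mat B"
    unfolding A'block A3U D3_def[symmetric] BD BDB ..
  define U where "U = W * B"
  have U: "U \<in> carrier_mat n n" unfolding U_def using W B by auto
  have Ut: "transpose_mat U = transpose_mat B * transpose_mat W" unfolding U_def
    using W B by (simp add: transpose_mult)
  have "transpose_mat U * U = (transpose_mat B * transpose_mat W) * (W * B)"
    using Ut U_def by simp
  also have "\<dots> = transpose_mat B * ((transpose_mat W * W) * B)"
    using W B by (simp add: assoc_mult_mat[of _ n n _ n _ n])
  also have "\<dots> = 1\<^sub>m n" unfolding WtW using B BtB by simp
  finally have UtU: "transpose_mat U * U = 1\<^sub>m n" .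
  have "A = W * A' * transpose_mat W" using simAA' unfolding similar_mat_wit_def Let_def by auto
  also have "\<dots> = (W * B) * Dn * (transpose_mat B * transpose_mat W)" unfolding A'BD using W B Dnc
    by (simp add: assoc_mult_mat[of _ n n _ n _ n])
  also have "\<dots> = U * Dn * transpose_mat U" using Ut U_def by simp
  finally show ?case using U UtU Dn by auto
qed


lemma qf_sum:
  fixes A :: "real mat"
  assumes A: "A \<in> carrier_mat n n" and x: "x \<in> carrier_vec n"
  shows "x \<bullet> (A *\<^sub>v x) = (\<Sum>i<n. \<Sum>j<n. x$i * A$$(i,j) * x$j)"
  using A x by (auto simp: scalar_prod_def sum_distrib_left lessThan_atLeast0 mult.assoc intro!: sum.cong)

lemma amgm_abs: "-(\<bar>a\<bar> * (x^2 + y^2) / 2) \<le> (a::real) * x * y"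
proof (cases "a \<ge> 0")
  case True
  have h: "0 \<le> a * (x + y)^2" using True by auto
  have e1: "a * (x + y)^2 = a * (x^2 + y^2) + 2 * (a * x * y)" by (simp add: power2_eq_square algebra_simps)
  have e2: "\<bar>a\<bar> = a" using True by simp
  show ?thesis using h unfolding e1 e2 by linarith
next
  case False
  have h: "0 \<le> (-a) * (x - y)^2" using False by (intro mult_nonneg_nonneg, auto)
  have e1: "(-a) * (x - y)^2 = -(a * (x^2 + y^2)) + 2 * (a * x * y)" by (simp add: power2_eq_square algebra_simps)
  have e2: "\<bar>a\<bar> = -a" using False by simp
  show ?thesis using h unfolding e1 e2 by linarith
qed

lemma psd_dd:
  fixes A :: "real mat"
  assumes A: "A \<in> carrier_mat n n"
    and symm: "\<And>i j. i < n \<Longrightarrow> j < n \<Longrightarrow> A $$ (i,j) = A $$ (j,i)"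
    and dd: "\<And>i. i < n \<Longrightarrow> (\<Sum>j \<in> {0..<n} - {i}. \<bar>A $$ (i,j)\<bar>) \<le> A $$ (i,i)"
  shows "psd A"
  unfolding psd_def
proof (intro ballI)
  fix x :: "real vec" assume "x \<in> carrier_vec (dim_row A)"
  then have x: "x \<in> carrier_vec n" using A by auto
  define off where "off = (\<lambda>i j. if i = j then 0 else \<bar>A $$ (i,j)\<bar>)"
  have offs: "\<And>i j. i < n \<Longrightarrow> j < n \<Longrightarrow> off i j = off j i" unfolding off_def using symm by auto
  have offsum: "\<And>i. i < n \<Longrightarrow> (\<Sum>j<n. off i j) = (\<Sum>j \<in> {0..<n} - {i}. \<bar>A $$ (i,j)\<bar>)"
  proof -
    fix i assume i: "i < n"
    have "(\<Sum>j<n. off i j) = (\<Sum>j \<in> {0..<n}. off i j)" by (simp add: lessThan_atLeast0)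
    also have "\<dots> = off i i + (\<Sum>j \<in> {0..<n} - {i}. off i j)"
      using i by (subst sum.remove[of _ i], auto)
    also have "\<dots> = (\<Sum>j \<in> {0..<n} - {i}. \<bar>A $$ (i,j)\<bar>)" unfolding off_def by (auto intro: sum.cong)
    finally show "?thesis i" .
  qed
  have "(\<Sum>i<n. \<Sum>j<n. (if i = j then A $$ (i,i) * (x$i)^2 else 0) - off i j * ((x$i)^2 + (x$j)^2) / 2)
        \<le> (\<Sum>i<n. \<Sum>j<n. x$i * A$$(i,j) * x$j)"
  proof (intro sum_mono)
    fix i j
    show "(if i = j then A $$ (i,i) * (x$i)^2 else 0) - off i j * ((x$i)^2 + (x$j)^2) / 2 \<le> x$i * A$$(i,j) * x$j"
      unfolding off_def using amgm_abs[of "A $$ (i,j)" "x$i" "x$j"] by (auto simp: power2_eq_square algebra_simps)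
  qed
  also have "(\<Sum>i<n. \<Sum>j<n. x$i * A$$(i,j) * x$j) = x \<bullet> (A *\<^sub>v x)" using qf_sum[OF A x] by simp
  finally have ineq: "(\<Sum>i<n. \<Sum>j<n. (if i = j then A $$ (i,i) * (x$i)^2 else 0) - off i j * ((x$i)^2 + (x$j)^2) / 2)
        \<le> x \<bullet> (A *\<^sub>v x)" .
  have s1: "(\<Sum>i<n. \<Sum>j<n. off i j * (x$j)^2) = (\<Sum>i<n. \<Sum>j<n. off i j * (x$i)^2)"
  proof -
    have "(\<Sum>i<n. \<Sum>j<n. off i j * (x$j)^2) = (\<Sum>j<n. \<Sum>i<n. off i j * (x$j)^2)" by (rule sum.swap)
    also have "\<dots> = (\<Sum>j<n. \<Sum>i<n. off j i * (x$j)^2)" using offs by (intro sum.cong refl, auto)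
    finally show ?thesis .
  qed
  have "(\<Sum>i<n. \<Sum>j<n. (if i = j then A $$ (i,i) * (x$i)^2 else 0) - off i j * ((x$i)^2 + (x$j)^2) / 2)
     = (\<Sum>i<n. A $$ (i,i) * (x$i)^2) - ((\<Sum>i<n. \<Sum>j<n. off i j * (x$i)^2) + (\<Sum>i<n. \<Sum>j<n. off i j * (x$j)^2)) / 2"
    by (simp add: sum_subtractf sum.distrib sum_divide_distrib[symmetric] algebra_simps)
  also have "\<dots> = (\<Sum>i<n. (A $$ (i,i) - (\<Sum>j<n. off i j)) * (x$i)^2)"
    unfolding s1 by (simp add: sum_subtractf sum_distrib_right algebra_simps)
  also have "\<dots> \<ge> 0"
  proof (intro sum_nonneg)
    fix i assume "i \<in> {..<n}"
    then have i: "i < n" by auto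
    show "0 \<le> (A $$ (i,i) - (\<Sum>j<n. off i j)) * (x$i)^2"
      using dd[OF i] offsum[OF i] by auto
  qed
  finally show "0 \<le> x \<bullet> (A *\<^sub>v x)" using ineq by linarith
qed


definition ones :: "nat \<Rightarrow> real vec" where "ones n = vec n (\<lambda>_. 1)"

lemma ones_carrier[simp]: "ones n \<in> carrier_vec n" unfolding ones_def by auto

lemma dot_ones: "x \<in> carrier_vec n \<Longrightarrow> x \<bullet> ones n = (\<Sum>i<n. x $ i)"
  unfolding ones_def scalar_prod_def by (auto simp: lessThan_atLeast0)

lemma dot_self: "(x :: real vec) \<in> carrier_vec n \<Longrightarrow> x \<bullet> x = (\<Sum>i<n. (x $ i)^2)"
  unfolding scalar_prod_def by (auto simp: lessThan_atLeast0 power2_eq_square)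

lemma qf_ab:
  fixes x :: "real vec"
  shows "(\<Sum>i<n. \<Sum>j<n. x$i * ((if i = j then a else 0) + b) * x$j)
    = a * (\<Sum>i<n. (x$i)^2) + b * (\<Sum>i<n. x$i)^2"
proof -
  have "(\<Sum>i<n. \<Sum>j<n. x$i * ((if i = j then a else 0) + b) * x$j)
     = (\<Sum>i<n. (\<Sum>j<n. (if i = j then a * (x$i)^2 else 0)) + (\<Sum>j<n. b * (x$i * x$j)))"
    by (intro sum.cong refl, subst sum.distrib[symmetric], intro sum.cong refl, auto simp: power2_eq_square algebra_simps)
  also have "\<dots> = (\<Sum>i<n. a * (x$i)^2) + (\<Sum>i<n. \<Sum>j<n. b * (x$i * x$j))"
    by (simp add: sum.distrib)
  also have "(\<Sum>i<n. \<Sum>j<n. b * (x$i * x$j)) = b * (\<Sum>i<n. x$i)^2"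
  proof -
    have "(\<Sum>i<n. x$i)^2 = (\<Sum>i<n. \<Sum>j<n. x$i * x$j)" by (simp add: power2_eq_square sum_product)
    then show ?thesis by (simp add: sum_distrib_left)
  qed
  finally show ?thesis by (simp add: sum_distrib_left)
qed

lemma qf_minus:
  fixes A B :: "real mat"
  assumes "A \<in> carrier_mat n n" "B \<in> carrier_mat n n" "x \<in> carrier_vec n"
  shows "x \<bullet> ((A - B) *\<^sub>v x) = x \<bullet> (A *\<^sub>v x) - x \<bullet> (B *\<^sub>v x)"
proof -
  have "A - B \<in> carrier_mat n n" using assms by auto
  from qf_sum[OF this assms(3)] qf_sum[OF assms(1,3)] qf_sum[OF assms(2,3)] assms
  show ?thesis by (simp add: sum_subtractf[symmetric] algebra_simps)
qed

lemma qf_smult: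
  fixes A :: "real mat"
  assumes "A \<in> carrier_mat n n" "x \<in> carrier_vec n"
  shows "x \<bullet> ((c \<cdot>\<^sub>m A) *\<^sub>v x) = c * (x \<bullet> (A *\<^sub>v x))"
proof -
  have "c \<cdot>\<^sub>m A \<in> carrier_mat n n" using assms by auto
  from qf_sum[OF this assms(2)] qf_sum[OF assms(1,2)] assms
  show ?thesis by (simp add: sum_distrib_left algebra_simps)
qed

lemma S_carrier[simp]: "S_mat n \<in> carrier_mat n n" unfolding S_mat_def by auto

lemma S_dims[simp]: "dim_row (S_mat n) = n" "dim_col (S_mat n) = n" unfolding S_mat_def by auto

lemma S_entry: "n \<ge> 2 \<Longrightarrow> i < n \<Longrightarrow> j < n \<Longrightarrow>
   S_mat n $$ (i,j) = (if i = j then real n - 2 else 0) + 1"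
  unfolding S_mat_def by (auto simp: of_nat_diff)

lemma qf_S:
  assumes n: "n \<ge> 2" and x: "x \<in> carrier_vec n"
  shows "x \<bullet> (S_mat n *\<^sub>v x) = (real n - 2) * (x \<bullet> x) + (x \<bullet> ones n)^2"
proof -
  have "x \<bullet> (S_mat n *\<^sub>v x) = (\<Sum>i<n. \<Sum>j<n. x$i * ((if i = j then real n - 2 else 0) + 1) * x$j)"
    unfolding qf_sum[OF S_carrier x] using S_entry[OF n] by (intro sum.cong refl, auto)
  then show ?thesis unfolding qf_ab dot_self[OF x] dot_ones[OF x] by simp
qed

lemma cauchy_ones:
  assumes x: "x \<in> carrier_vec n"
  shows "(x \<bullet> ones n)^2 \<le> real n * (x \<bullet> x)"
proof -
  define C where "C = mat n n (\<lambda>(i,j). (if i = j then real n else 0) + (-1 :: real))"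
  have C: "C \<in> carrier_mat n n" unfolding C_def by auto
  have "psd C"
  proof (rule psd_dd[OF C])
    fix i assume i: "i < n"
    have "(\<Sum>j \<in> {0..<n} - {i}. \<bar>C $$ (i,j)\<bar>) = (\<Sum>j \<in> {0..<n} - {i}. 1)"
      unfolding C_def using i by (intro sum.cong refl, auto)
    also have "\<dots> = real n - 1" using i by (simp add: of_nat_diff)
    finally show "(\<Sum>j \<in> {0..<n} - {i}. \<bar>C $$ (i,j)\<bar>) \<le> C $$ (i,i)" unfolding C_def using i by auto
  qed (auto simp: C_def)
  then have "0 \<le> x \<bullet> (C *\<^sub>v x)" unfolding psd_def using x C by auto
  also have "x \<bullet> (C *\<^sub>v x) = (\<Sum>i<n. \<Sum>j<n. x$i * ((if i = j then real n else 0) + (-1)) * x$j)"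
    unfolding qf_sum[OF C x] unfolding C_def by (intro sum.cong refl, auto)
  finally show ?thesis unfolding qf_ab dot_self[OF x] dot_ones[OF x] by simp
qed


lemma eig_basis:
  fixes J :: "real mat"
  assumes J: "J \<in> carrier_mat n n" and sym: "transpose_mat J = J"
    and se: "sorted_eigenvalues J lams"
  shows "\<exists>U. U \<in> carrier_mat n n \<and> U * transpose_mat U = 1\<^sub>m n \<and>
     (\<forall>y \<in> carrier_vec n. (U *\<^sub>v y) \<bullet> (J *\<^sub>v (U *\<^sub>v y)) = (\<Sum>k<n. lams ! k * (y $ k)^2)
        \<and> (U *\<^sub>v y) \<bullet> (U *\<^sub>v y) = y \<bullet> y)"
proof -
  from se have cp: "char_poly J = (\<Prod>a \<leftarrow> lams. [:- a, 1:])" unfolding sorted_eigenvalues_def by auto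
  from spectral[OF J sym cp] obtain U where U: "U \<in> carrier_mat n n"
    and UtU: "transpose_mat U * U = 1\<^sub>m n" and JU: "J = U * diag_list n lams * transpose_mat U" by auto
  have UUt: "U * transpose_mat U = 1\<^sub>m n" by (rule mat_mult_left_right_inverse[OF _ U UtU], insert U, auto)
  define D where "D = diag_list n lams"
  have D: "D \<in> carrier_mat n n" unfolding D_def diag_list_def by auto
  have Ut: "transpose_mat U \<in> carrier_mat n n" using U by auto
  have inner: "\<And>y z. y \<in> carrier_vec n \<Longrightarrow> z \<in> carrier_vec n \<Longrightarrow> (U *\<^sub>v y) \<bullet> (U *\<^sub>v z) = y \<bullet> z"
  proof -
    fix y z :: "real vec" assume y: "y \<in> carrier_vec n" and z: "z \<in> carrier_vec n"
    have "(U *\<^sub>v y) \<bullet> (U *\<^sub>v z) = (transpose_mat U *\<^sub>v (U *\<^sub>v y)) \<bullet> z"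
      using transpose_vec_mult_scalar[OF U z, of "U *\<^sub>v y"] U y by auto
    also have "transpose_mat U *\<^sub>v (U *\<^sub>v y) = y"
      using assoc_mult_mat_vec[OF Ut U y, symmetric] UtU y by auto
    finally show "(U *\<^sub>v y) \<bullet> (U *\<^sub>v z) = y \<bullet> z" .
  qed
  show ?thesis
  proof (intro exI[of _ U] conjI U UUt ballI)
    fix y :: "real vec" assume y: "y \<in> carrier_vec n"
    have Dy: "D *\<^sub>v y \<in> carrier_vec n" using D y by auto
    have "J *\<^sub>v (U *\<^sub>v y) = U *\<^sub>v (D *\<^sub>v (transpose_mat U *\<^sub>v (U *\<^sub>v y)))"
      unfolding JU D_def[symmetric] using U D y by (simp add: assoc_mult_mat_vec[of _ n n _ n])
    also have "transpose_mat U *\<^sub>v (U *\<^sub>v y) = y"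
      using assoc_mult_mat_vec[OF Ut U y, symmetric] UtU y by auto
    finally have "(U *\<^sub>v y) \<bullet> (J *\<^sub>v (U *\<^sub>v y)) = y \<bullet> (D *\<^sub>v y)"
      using inner[OF y Dy] by simp
    also have "\<dots> = (\<Sum>i<n. \<Sum>j<n. y$i * D$$(i,j) * y$j)" by (rule qf_sum[OF D y])
    also have "\<dots> = (\<Sum>i<n. \<Sum>j<n. (if i = j then lams ! i * (y$i)^2 else 0))"
      unfolding D_def diag_list_def by (intro sum.cong refl, auto simp: power2_eq_square)
    also have "\<dots> = (\<Sum>k<n. lams ! k * (y $ k)^2)" by simp
    finally show "(U *\<^sub>v y) \<bullet> (J *\<^sub>v (U *\<^sub>v y)) = (\<Sum>k<n. lams ! k * (y $ k)^2)" .
    show "(U *\<^sub>v y) \<bullet> (U *\<^sub>v y) = y \<bullet> y" by (rule inner[OF y y])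
  qed
qed


lemma sum_two:
  fixes n :: nat
  assumes n: "n \<ge> 2" and g0: "\<And>k. g k 0 = (0::real)"
  shows "(\<Sum>k<n. g k (if k = n-2 then p else if k = n-1 then q else 0)) = g (n-2) p + g (n-1) q"
proof -
  have "(\<Sum>k<n. g k (if k = n-2 then p else if k = n-1 then q else 0))
     = (\<Sum>k<n. (if k = n-2 then g k p else 0) + (if k = n-1 then g k q else 0))"
    using n g0 by (intro sum.cong refl, auto)
  also have "\<dots> = g (n-2) p + g (n-1) q" using n by (simp add: sum.distrib)
  finally show ?thesis .
qed

theorem lemma7p1:
  fixes J :: "real mat" and n :: nat and l m :: real
  assumes n: "n \<ge> 3"
    and lm: "0 < l" "l \<le> m"
    and J: "J \<in> carrier_mat n n"
    and sym: "transpose_mat J = J"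
    and diag_nonneg: "\<forall>i < n. J $$ (i, i) \<ge> 0"
    and offdiag: "\<forall>i < n. \<forall>j < n. i \<noteq> j \<longrightarrow> l \<le> J $$ (i, j) \<and> J $$ (i, j) \<le> m"
  shows "(diag_balanced J \<longrightarrow>
            loewner_le (l \<cdot>\<^sub>m S_mat n) J \<and> loewner_le J (m \<cdot>\<^sub>m S_mat n) \<and>
            (\<forall>lams. sorted_eigenvalues J lams \<longrightarrow>
               (\<forall>i < n - 1. real (n - 2) * l \<le> lams ! i \<and> lams ! i \<le> real (n - 2) * m) \<and>
               2 * real (n - 1) * l \<le> lams ! (n - 1) \<and> lams ! (n - 1) \<le> 2 * real (n - 1) * m))
       \<and> (diag_dominant J \<longrightarrow>
            loewner_le (l \<cdot>\<^sub>m S_mat n) J \<and>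
            (\<forall>lams. sorted_eigenvalues J lams \<longrightarrow>
               (\<forall>i < n - 1. real (n - 2) * l \<le> lams ! i) \<and>
               2 * real (n - 1) * l \<le> lams ! (n - 1)))"
proof -
  have n2: "n \<ge> 2" using n by auto
  have rn2: "real (n - 2) = real n - 2" using n2 by (simp add: of_nat_diff)
  have rn1: "real (n - 1) = real n - 1" using n2 by (simp add: of_nat_diff)
  have Jsym: "\<And>i j. i < n \<Longrightarrow> j < n \<Longrightarrow> J $$ (i,j) = J $$ (j,i)"
  proof -
    fix i j assume "i < n" "j < n"
    then have "transpose_mat J $$ (i,j) = J $$ (j,i)" using J by auto
    then show "J $$ (i,j) = J $$ (j,i)" using sym by simp
  qed
  have Jabs: "\<And>i j. i < n \<Longrightarrow> j < n \<Longrightarrow> i \<noteq> j \<Longrightarrow> \<bar>J $$ (i,j)\<bar> = J $$ (i,j)"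
  proof -
    fix i j assume "i < n" "j < n" "i \<noteq> j"
    then have "l \<le> J $$ (i,j)" using offdiag by auto
    then show "\<bar>J $$ (i,j)\<bar> = J $$ (i,j)" using lm by auto
  qed
  have cardi: "\<And>i. i < n \<Longrightarrow> card ({0..<n} - {i}) = n - 1" by auto
  have sumc: "\<And>i c. i < n \<Longrightarrow> (\<Sum>j\<in>{0..<n} - {i}. (c::real)) = (real n - 1) * c"
    using cardi rn1 by simp
  have rex: "\<And>i. i < n \<Longrightarrow> row_excess J i = J $$ (i,i) - (\<Sum>j\<in>{0..<n} - {i}. J $$ (i,j))"
  proof -
    fix i assume i: "i < n"
    have "(\<Sum>j\<in>{0..<n} - {i}. \<bar>J $$ (i,j)\<bar>) = (\<Sum>j\<in>{0..<n} - {i}. J $$ (i,j))"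
      using Jabs i by (intro sum.cong refl, auto)
    then show "row_excess J i = J $$ (i,i) - (\<Sum>j\<in>{0..<n} - {i}. J $$ (i,j))"
      unfolding row_excess_def using J diag_nonneg i by auto
  qed
  have Sc: "S_mat n \<in> carrier_mat n n" by simp
  have LS: "diag_dominant J \<Longrightarrow> psd (J - l \<cdot>\<^sub>m S_mat n)"
  proof -
    assume dd: "diag_dominant J"
    define M where "M = J - l \<cdot>\<^sub>m S_mat n"
    have M: "M \<in> carrier_mat n n" unfolding M_def using J Sc by (intro minus_carrier_mat, auto)
    have Me: "\<And>i j. i < n \<Longrightarrow> j < n \<Longrightarrow> M $$ (i,j) = J $$ (i,j) - l * ((if i = j then real n - 2 else 0) + 1)"
      unfolding M_def using J S_entry[OF n2] by auto
    have "psd M"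
    proof (rule psd_dd[OF M])
      fix i j assume "i < n" "j < n"
      then show "M $$ (i,j) = M $$ (j,i)" using Me Jsym by auto
    next
      fix i assume i: "i < n"
      have "(\<Sum>j\<in>{0..<n} - {i}. \<bar>M $$ (i,j)\<bar>) = (\<Sum>j\<in>{0..<n} - {i}. J $$ (i,j) - l)"
        using Me offdiag i by (intro sum.cong refl, auto)
      also have "\<dots> = (\<Sum>j\<in>{0..<n} - {i}. J $$ (i,j)) - (real n - 1) * l"
        using sumc[OF i] by (simp add: sum_subtractf)
      finally show "(\<Sum>j\<in>{0..<n} - {i}. \<bar>M $$ (i,j)\<bar>) \<le> M $$ (i,i)"
        using dd i rex[OF i] Me[OF i i] J unfolding diag_dominant_def by (auto simp: algebra_simps)
    qed
    then show ?thesis unfolding M_def .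
  qed
  have US: "diag_balanced J \<Longrightarrow> psd (m \<cdot>\<^sub>m S_mat n - J)"
  proof -
    assume db: "diag_balanced J"
    define M where "M = m \<cdot>\<^sub>m S_mat n - J"
    have M: "M \<in> carrier_mat n n" unfolding M_def using J Sc by (intro minus_carrier_mat, auto)
    have Me: "\<And>i j. i < n \<Longrightarrow> j < n \<Longrightarrow> M $$ (i,j) = m * ((if i = j then real n - 2 else 0) + 1) - J $$ (i,j)"
      unfolding M_def using J S_entry[OF n2] by auto
    have "psd M"
    proof (rule psd_dd[OF M])
      fix i j assume "i < n" "j < n"
      then show "M $$ (i,j) = M $$ (j,i)" using Me Jsym by auto
    next
      fix i assume i: "i < n"
      have "(\<Sum>j\<in>{0..<n} - {i}. \<bar>M $$ (i,j)\<bar>) = (\<Sum>j\<in>{0..<n} - {i}. m - J $$ (i,j))"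
        using Me offdiag i by (intro sum.cong refl, auto)
      also have "\<dots> = (real n - 1) * m - (\<Sum>j\<in>{0..<n} - {i}. J $$ (i,j))"
        using sumc[OF i] by (simp add: sum_subtractf)
      finally show "(\<Sum>j\<in>{0..<n} - {i}. \<bar>M $$ (i,j)\<bar>) \<le> M $$ (i,i)"
        using db i rex[OF i] Me[OF i i] J unfolding diag_balanced_def by (auto simp: algebra_simps)
    qed
    then show ?thesis unfolding M_def .
  qed
  have bal_dom: "diag_balanced J \<Longrightarrow> diag_dominant J"
    unfolding diag_balanced_def diag_dominant_def by auto
  have qlow: "\<And>x. diag_dominant J \<Longrightarrow> x \<in> carrier_vec n \<Longrightarrow>
      l * ((real n - 2) * (x \<bullet> x) + (x \<bullet> ones n)^2) \<le> x \<bullet> (J *\<^sub>v x)"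
  proof -
    fix x :: "real vec" assume dd: "diag_dominant J" and x: "x \<in> carrier_vec n"
    have "0 \<le> x \<bullet> ((J - l \<cdot>\<^sub>m S_mat n) *\<^sub>v x)" using LS[OF dd] x J unfolding psd_def by auto
    also have "\<dots> = x \<bullet> (J *\<^sub>v x) - l * (x \<bullet> (S_mat n *\<^sub>v x))"
      using qf_minus[OF J _ x, of "l \<cdot>\<^sub>m S_mat n"] qf_smult[OF Sc x] by auto
    finally show "l * ((real n - 2) * (x \<bullet> x) + (x \<bullet> ones n)^2) \<le> x \<bullet> (J *\<^sub>v x)"
      using qf_S[OF n2 x] by auto
  qed
  have qup: "\<And>x. diag_balanced J \<Longrightarrow> x \<in> carrier_vec n \<Longrightarrow>
      x \<bullet> (J *\<^sub>v x) \<le> m * ((real n - 2) * (x \<bullet> x) + (x \<bullet> ones n)^2)"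
  proof -
    fix x :: "real vec" assume db: "diag_balanced J" and x: "x \<in> carrier_vec n"
    have "0 \<le> x \<bullet> ((m \<cdot>\<^sub>m S_mat n - J) *\<^sub>v x)" using US[OF db] x J unfolding psd_def by auto
    also have "\<dots> = m * (x \<bullet> (S_mat n *\<^sub>v x)) - x \<bullet> (J *\<^sub>v x)"
      using qf_minus[OF _ J x, of "m \<cdot>\<^sub>m S_mat n"] qf_smult[OF Sc x] by auto
    finally show "x \<bullet> (J *\<^sub>v x) \<le> m * ((real n - 2) * (x \<bullet> x) + (x \<bullet> ones n)^2)"
      using qf_S[OF n2 x] by auto
  qed
  have EIG: "\<And>lams. sorted_eigenvalues J lams \<Longrightarrow> diag_dominant J \<Longrightarrow>
      (\<forall>k < n. (real n - 2) * l \<le> lams ! k) \<and> 2 * (real n - 1) * l \<le> lams ! (n - 1) \<and>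
      (diag_balanced J \<longrightarrow> lams ! (n-1) \<le> 2 * (real n - 1) * m \<and> lams ! (n-2) \<le> (real n - 2) * m)"
  proof -
    fix lams assume se: "sorted_eigenvalues J lams" and dd: "diag_dominant J"
    from se have sl: "sorted lams" and ll: "length lams = n" unfolding sorted_eigenvalues_def using J by auto
    have mono: "\<And>i j. i \<le> j \<Longrightarrow> j < n \<Longrightarrow> lams ! i \<le> lams ! j"
      using sl ll by (simp add: sorted_nth_mono)
    from eig_basis[OF J sym se] obtain U where U: "U \<in> carrier_mat n n"
      and UUt: "U * transpose_mat U = 1\<^sub>m n"
      and P: "\<And>y. y \<in> carrier_vec n \<Longrightarrow> (U *\<^sub>v y) \<bullet> (J *\<^sub>v (U *\<^sub>v y)) = (\<Sum>k<n. lams ! k * (y $ k)^2)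
        \<and> (U *\<^sub>v y) \<bullet> (U *\<^sub>v y) = y \<bullet> y" by blast
    have unitk: "\<And>k. k < n \<Longrightarrow> (U *\<^sub>v unit_vec n k) \<bullet> (J *\<^sub>v (U *\<^sub>v unit_vec n k)) = lams ! k
         \<and> (U *\<^sub>v unit_vec n k) \<bullet> (U *\<^sub>v unit_vec n k) = 1"
    proof -
      fix k assume k: "k < n"
      have "(\<Sum>j<n. lams ! j * (unit_vec n k $ j)^2) = (\<Sum>j<n. if j = k then lams ! k else 0)"
        using k by (intro sum.cong refl, auto)
      also have "\<dots> = lams ! k" using k by simp
      finally have a: "(\<Sum>j<n. lams ! j * (unit_vec n k $ j)^2) = lams ! k" .
      have "unit_vec n k \<bullet> (unit_vec n k :: real vec) = (\<Sum>j<n. (unit_vec n k $ j)^2)" by (rule dot_self[OF unit_vec_carrier])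
      also have "\<dots> = (\<Sum>j<n. if j = k then 1 else 0)"
        using k by (intro sum.cong refl, auto)
      also have "\<dots> = 1" using k by simp
      finally show "?thesis k" using P[of "unit_vec n k"] a by auto
    qed
    have E1: "\<forall>k < n. (real n - 2) * l \<le> lams ! k"
    proof (intro allI impI)
      fix k assume k: "k < n"
      define x where "x = U *\<^sub>v unit_vec n k"
      have x: "x \<in> carrier_vec n" unfolding x_def using U by auto
      from qlow[OF dd x] unitk[OF k] have "l * ((real n - 2) * 1 + (x \<bullet> ones n)^2) \<le> lams ! k"
        unfolding x_def by auto
      moreover have "0 \<le> l * (x \<bullet> ones n)^2" using lm by auto
      ultimately show "(real n - 2) * l \<le> lams ! k" by (auto simp: algebra_simps)
    qed
    have E2: "2 * (real n - 1) * l \<le> lams ! (n - 1)"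
    proof -
      define y where "y = transpose_mat U *\<^sub>v ones n"
      have y: "y \<in> carrier_vec n" unfolding y_def using U by auto
      have Uy: "U *\<^sub>v y = ones n" unfolding y_def
        using assoc_mult_mat_vec[of U n n "transpose_mat U" n "ones n", symmetric] U UUt by auto
      have oo: "ones n \<bullet> ones n = real n"
      proof -
        have "ones n \<bullet> ones n = (\<Sum>i<n. ones n $ i)" by (rule dot_ones[OF ones_carrier])
        also have "\<dots> = (\<Sum>i<n. 1)" by (intro sum.cong refl, auto simp: ones_def)
        finally show ?thesis by simp
      qed
      have "(\<Sum>k<n. lams ! k * (y $ k)^2) \<le> (\<Sum>k<n. lams ! (n-1) * (y $ k)^2)"
        by (intro sum_mono mult_right_mono mono, auto)
      also have "\<dots> = lams ! (n-1) * (y \<bullet> y)" unfolding dot_self[OF y] by (simp add: sum_distrib_left)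
      also have "y \<bullet> y = real n" using P[OF y] Uy oo by auto
      finally have up: "ones n \<bullet> (J *\<^sub>v ones n) \<le> lams ! (n-1) * real n" using P[OF y] Uy by auto
      have low: "l * ((real n - 2) * real n + (real n)^2) \<le> ones n \<bullet> (J *\<^sub>v ones n)"
        using qlow[OF dd ones_carrier] oo by auto
      have "real n * (2 * (real n - 1) * l) \<le> real n * lams ! (n - 1)"
        using up low by (auto simp: power2_eq_square algebra_simps)
      then show ?thesis using n by auto
    qed
    have E3: "diag_balanced J \<Longrightarrow> lams ! (n-1) \<le> 2 * (real n - 1) * m \<and> lams ! (n-2) \<le> (real n - 2) * m"
    proof
      assume db: "diag_balanced J"
      have k: "n - 1 < n" using n by auto
      define x where "x = U *\<^sub>v unit_vec n (n-1)"
      have x: "x \<in> carrier_vec n" unfolding x_def using U by auto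
      from qup[OF db x] unitk[OF k] have "lams ! (n-1) \<le> m * ((real n - 2) * 1 + (x \<bullet> ones n)^2)"
        unfolding x_def by auto
      moreover have "(x \<bullet> ones n)^2 \<le> real n * 1" using cauchy_ones[OF x] unitk[OF k] unfolding x_def by auto
      ultimately have "lams ! (n-1) \<le> m * ((real n - 2) + real n)"
        using lm by (smt (verit) mult_left_mono)
      then show "lams ! (n-1) \<le> 2 * (real n - 1) * m" by (auto simp: algebra_simps)
    next
      assume db: "diag_balanced J"
      define c where "c = transpose_mat U *\<^sub>v ones n"
      have c: "c \<in> carrier_vec n" unfolding c_def using U by auto
      define p where "p = (if c $ (n-1) = 0 \<and> c $ (n-2) = 0 then 0 else c $ (n-1))"
      define q where "q = (if c $ (n-1) = 0 \<and> c $ (n-2) = 0 then 1 else - c $ (n-2))"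
      have pq: "p * c $ (n-2) + q * c $ (n-1) = 0" unfolding p_def q_def by auto
      have pq0: "p^2 + q^2 > 0" unfolding p_def q_def by (auto simp: sum_power2_gt_zero_iff)
      define y where "y = vec n (\<lambda>k. if k = n-2 then p else if k = n-1 then q else 0)"
      have y: "y \<in> carrier_vec n" unfolding y_def by auto
      have yk: "\<And>k. k < n \<Longrightarrow> y $ k = (if k = n-2 then p else if k = n-1 then q else 0)"
        unfolding y_def by auto
      have yc: "y \<bullet> c = 0"
      proof -
        have "y \<bullet> c = (\<Sum>k<n. y $ k * c $ k)" using y c by (auto simp: scalar_prod_def lessThan_atLeast0)
        also have "\<dots> = (\<Sum>k<n. (\<lambda>k v. v * c $ k) k (if k = n-2 then p else if k = n-1 then q else 0))"
          using yk by (intro sum.cong refl, auto)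
        also have "\<dots> = p * c $ (n-2) + q * c $ (n-1)" by (rule sum_two[OF n2], auto)
        finally show ?thesis using pq by simp
      qed
      have yy: "y \<bullet> y = p^2 + q^2"
      proof -
        have "y \<bullet> y = (\<Sum>k<n. (y $ k)^2)" by (rule dot_self[OF y])
        also have "\<dots> = (\<Sum>k<n. (\<lambda>k v. v^2) k (if k = n-2 then p else if k = n-1 then q else 0))"
          using yk by (intro sum.cong refl, auto)
        also have "\<dots> = p^2 + q^2" by (rule sum_two[OF n2], auto)
        finally show ?thesis .
      qed
      have ylam: "(\<Sum>k<n. lams ! k * (y $ k)^2) = lams ! (n-2) * p^2 + lams ! (n-1) * q^2"
      proof -
        have "(\<Sum>k<n. lams ! k * (y $ k)^2) = (\<Sum>k<n. (\<lambda>k v. lams ! k * v^2) k (if k = n-2 then p else if k = n-1 then q else 0))"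
          using yk by (intro sum.cong refl, auto)
        also have "\<dots> = lams ! (n-2) * p^2 + lams ! (n-1) * q^2" by (rule sum_two[OF n2], auto)
        finally show ?thesis .
      qed
      define x where "x = U *\<^sub>v y"
      have x: "x \<in> carrier_vec n" unfolding x_def using U y by auto
      have xo: "x \<bullet> ones n = 0"
      proof -
        have "c \<bullet> y = ones n \<bullet> x" unfolding c_def x_def by (rule transpose_vec_mult_scalar[OF U y], simp)
        also have "ones n \<bullet> x = x \<bullet> ones n" by (rule comm_scalar_prod[OF ones_carrier x])
        finally show ?thesis using yc comm_scalar_prod[OF y c] by simp
      qed
      have "x \<bullet> (J *\<^sub>v x) \<le> m * ((real n - 2) * (p^2 + q^2))"
        using qup[OF db x] xo P[OF y] yy unfolding x_def by auto
      moreover have "x \<bullet> (J *\<^sub>v x) = lams ! (n-2) * p^2 + lams ! (n-1) * q^2"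
        using P[OF y] ylam unfolding x_def by auto
      moreover have "lams ! (n-2) \<le> lams ! (n-1)" using mono[of "n-2" "n-1"] n by auto
      moreover have "0 \<le> q^2" by auto
      ultimately have "lams ! (n-2) * (p^2 + q^2) \<le> ((real n - 2) * m) * (p^2 + q^2)"
        by (smt (verit, best) distrib_left mult.commute mult.left_commute mult_right_mono)
      then show "lams ! (n-2) \<le> (real n - 2) * m" using pq0 by auto
    qed
    show "?thesis lams" using E1 E2 E3 by auto
  qed
  show ?thesis
  proof (intro conjI impI)
    assume db: "diag_balanced J"
    show "loewner_le (l \<cdot>\<^sub>m S_mat n) J" unfolding loewner_le_def using LS[OF bal_dom[OF db]] .
    show "loewner_le J (m \<cdot>\<^sub>m S_mat n)" unfolding loewner_le_def using US[OF db] .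
    show "\<forall>lams. sorted_eigenvalues J lams \<longrightarrow>
               (\<forall>i < n - 1. real (n - 2) * l \<le> lams ! i \<and> lams ! i \<le> real (n - 2) * m) \<and>
               2 * real (n - 1) * l \<le> lams ! (n - 1) \<and> lams ! (n - 1) \<le> 2 * real (n - 1) * m"
    proof (intro allI impI)
      fix lams assume se: "sorted_eigenvalues J lams"
      from se have sl: "sorted lams" and ll: "length lams = n" unfolding sorted_eigenvalues_def using J by auto
      note E = EIG[OF se bal_dom[OF db]]
      have A: "\<forall>i < n - 1. real (n - 2) * l \<le> lams ! i \<and> lams ! i \<le> real (n - 2) * m"
      proof (intro allI impI conjI)
        fix i assume i: "i < n - 1"
        show "real (n - 2) * l \<le> lams ! i" using E i rn2 by auto
        have "lams ! i \<le> lams ! (n-2)" using sl ll i by (intro sorted_nth_mono, auto)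
        then show "lams ! i \<le> real (n - 2) * m" using E db rn2 by auto
      qed
      have B: "2 * real (n - 1) * l \<le> lams ! (n - 1)" using E rn1 by auto
      have C: "lams ! (n - 1) \<le> 2 * real (n - 1) * m" using E rn1 db by auto
      show "(\<forall>i < n - 1. real (n - 2) * l \<le> lams ! i \<and> lams ! i \<le> real (n - 2) * m) \<and>
               2 * real (n - 1) * l \<le> lams ! (n - 1) \<and> lams ! (n - 1) \<le> 2 * real (n - 1) * m"
        using A B C by blast
    qed
  next
    assume dd: "diag_dominant J"
    show "loewner_le (l \<cdot>\<^sub>m S_mat n) J" unfolding loewner_le_def using LS[OF dd] .
    show "\<forall>lams. sorted_eigenvalues J lams \<longrightarrow>
               (\<forall>i < n - 1. real (n - 2) * l \<le> lams ! i) \<and>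
               2 * real (n - 1) * l \<le> lams ! (n - 1)"
    proof (intro allI impI)
      fix lams assume se: "sorted_eigenvalues J lams"
      note E = EIG[OF se dd]
      have A: "\<forall>i < n - 1. real (n - 2) * l \<le> lams ! i" using E rn2 by auto
      have B: "2 * real (n - 1) * l \<le> lams ! (n - 1)" using E rn1 by auto
      show "(\<forall>i < n - 1. real (n - 2) * l \<le> lams ! i) \<and> 2 * real (n - 1) * l \<le> lams ! (n - 1)"
        using A B by blast
    qed
  qed
qed

end
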